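(* Let $(X,d)$ be a compact metric space and let $f_1,f_2:X\to X$ be continuous. Suppose there exists $0<\lambda<1$ such that for all nonempty open sets $U,V\subset X$ there exist $x\in U$ and $y\in V$ with $d(f_i(x),f_i(y))<\lambda\, d(x,y)$ for $i=1,2$. Then the multiple mapping $F=\{f_1,f_2\}$ is (Hausdorff metric) accessible.
   Context: For the multiple mapping $F=\{f_1,f_2\}$ and $n\ge 1$, $F^n(x)=\{f_{i_1}f_{i_2}\cdots f_{i_n}(x)\mid i_1,\dots,i_n\in\{1,2\}\}$. The Hausdorff metric on nonempty compact subsets is $d_H(A,B)=\max\{\sup_{a\in A}\inf_{b\in B}d(a,b),\sup_{b\in B}\inf_{a\in A}d(a,b)\}$. $F$ is (Hausdorff metric) accessible if for every $\epsilon>0$ and all nonempty open $U,V\subset X$ there exist $x\in U$, $y\in V$ and $n\in\mathbb{Z}^+=\{1,2,\dots\}$ with $d_H(F^n(x),F^n(y))<\epsilon$. *)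

theory Defs
  imports "HOL-Analysis.Analysis"
begin

definition multi_iter :: "('a \<Rightarrow> 'a) \<Rightarrow> ('a \<Rightarrow> 'a) \<Rightarrow> nat \<Rightarrow> 'a \<Rightarrow> 'a set" where
  "multi_iter f1 f2 n x =
     {foldr (\<lambda>i y. (if i = (1::nat) then f1 else f2) y) ws x | ws. ws \<in> lists {1,2} \<and> length ws = n}"

text \<open>Hausdorff metric, as in the paper (used on nonempty compact, here finite, sets).\<close>
definition hausdorff_dist :: "'a::metric_space set \<Rightarrow> 'a set \<Rightarrow> real" where
  "hausdorff_dist A B =
     max (SUP a\<in>A. INF b\<in>B. dist a b) (SUP b\<in>B. INF a\<in>A. dist a b)"

definition hm_accessible :: "'a::metric_space set \<Rightarrow> ('a \<Rightarrow> 'a) \<Rightarrow> ('a \<Rightarrow> 'a) \<Rightarrow> bool" where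
  "hm_accessible X f1 f2 \<longleftrightarrow>
     (\<forall>\<epsilon>>0. \<forall>U V. openin (top_of_set X) U \<and> U \<noteq> {} \<and> openin (top_of_set X) V \<and> V \<noteq> {} \<longrightarrow>
        (\<exists>x\<in>U. \<exists>y\<in>V. \<exists>n::nat. n \<ge> 1 \<and>
           hausdorff_dist (multi_iter f1 f2 n x) (multi_iter f1 f2 n y) < \<epsilon>))"

end

theory Submission
  imports Defs
begin

lemma lip_from_dense:
  fixes X :: "'a::metric_space set" and f :: "'a \<Rightarrow> 'a" and lam :: real
  assumes cont: "continuous_on X f" and lam: "0 < lam" "lam < 1"
    and H: "\<forall>U V. openin (top_of_set X) U \<and> U \<noteq> {} \<and> openin (top_of_set X) V \<and> V \<noteq> {} \<longrightarrow>
           (\<exists>x\<in>U. \<exists>y\<in>V. dist (f x) (f y) < lam * dist x y)"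
    and xy: "x \<in> X" "y \<in> X"
  shows "dist (f x) (f y) \<le> lam * dist x y"
proof (rule ccontr)
  assume neg: "\<not> dist (f x) (f y) \<le> lam * dist x y"
  define d where "d = dist (f x) (f y) - lam * dist x y"
  have d: "d > 0" using neg d_def by simp
  obtain r1 where r1: "r1 > 0" "\<forall>x'\<in>X. dist x' x < r1 \<longrightarrow> dist (f x') (f x) < d/4"
    using cont xy(1) d unfolding continuous_on_iff
    by (elim ballE allE[of _ "d/4"] impE) auto
  obtain r2 where r2: "r2 > 0" "\<forall>x'\<in>X. dist x' y < r2 \<longrightarrow> dist (f x') (f y) < d/4"
    using cont xy(2) d unfolding continuous_on_iff
    by (elim ballE allE[of _ "d/4"] impE) auto
  define r where "r = min (min r1 r2) (d/4)"
  have r: "r > 0" "r \<le> r1" "r \<le> r2" "r \<le> d/4" using r1 r2 d by (auto simp: r_def)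
  have "\<exists>x'\<in>ball x r \<inter> X. \<exists>y'\<in>ball y r \<inter> X. dist (f x') (f y') < lam * dist x' y'"
  proof (rule H[rule_format])
    have "openin (top_of_set X) (X \<inter> ball x r)" "openin (top_of_set X) (X \<inter> ball y r)"
      by (rule openin_open_Int, simp)+
    moreover have "x \<in> ball x r \<inter> X" "y \<in> ball y r \<inter> X" using r xy by auto
    ultimately show "openin (top_of_set X) (ball x r \<inter> X) \<and> ball x r \<inter> X \<noteq> {} \<and>
      openin (top_of_set X) (ball y r \<inter> X) \<and> ball y r \<inter> X \<noteq> {}"
      by (auto simp: Int_commute)
  qed
  then obtain x' y' where x': "x' \<in> X" "dist x x' < r" and y': "y' \<in> X" "dist y y' < r"
    and c: "dist (f x') (f y') < lam * dist x' y'" by auto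
  have a1: "dist (f x') (f x) < d/4" using r1(2) x' r by (metis dist_commute order_less_le_trans)
  have a2: "dist (f y') (f y) < d/4" using r2(2) y' r by (metis dist_commute order_less_le_trans)
  have t1: "dist (f x) (f y) \<le> dist (f x) (f x') + dist (f x') (f y)" by (rule dist_triangle)
  have t2: "dist (f x') (f y) \<le> dist (f x') (f y') + dist (f y') (f y)" by (rule dist_triangle)
  have t3: "dist x' y' \<le> dist x' x + dist x y'" by (rule dist_triangle)
  have t4: "dist x y' \<le> dist x y + dist y y'" by (rule dist_triangle)
  have s1: "dist (f x) (f x') = dist (f x') (f x)" "dist x' x = dist x x'" by (simp_all add: dist_commute)
  have t5: "dist x' y' \<le> dist x y + 2*r" using t3 t4 s1 x' y' by linarith
  have t6: "lam * dist x' y' \<le> lam * (dist x y + 2*r)"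
    using t5 lam by (intro mult_left_mono) auto
  have t7: "lam * (2*r) \<le> 1 * (2*r)" using lam r by (intro mult_right_mono) auto
  have t8: "lam * (dist x y + 2*r) = lam * dist x y + lam * (2*r)" by (simp add: distrib_left)
  show False using c d_def r a1 a2 t1 t2 s1 t6 t7 t8 by linarith
qed

theorem theorem3p9:
  fixes X :: "'a::metric_space set" and f1 f2 :: "'a \<Rightarrow> 'a" and lam :: real
  assumes "compact X"
    and "continuous_on X f1" and "f1 ` X \<subseteq> X"
    and "continuous_on X f2" and "f2 ` X \<subseteq> X"
    and "0 < lam" and "lam < 1"
    and "\<forall>U V. openin (top_of_set X) U \<and> U \<noteq> {} \<and> openin (top_of_set X) V \<and> V \<noteq> {} \<longrightarrow>
           (\<exists>x\<in>U. \<exists>y\<in>V. dist (f1 x) (f1 y) < lam * dist x y \<and> dist (f2 x) (f2 y) < lam * dist x y)"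
  shows "hm_accessible X f1 f2"
proof -
  note H = assms(8)
  have L1: "dist (f1 x) (f1 y) \<le> lam * dist x y" if "x \<in> X" "y \<in> X" for x y
    by (rule lip_from_dense[OF assms(2) assms(6,7) _ that]) (use H in blast)
  have L2: "dist (f2 x) (f2 y) \<le> lam * dist x y" if "x \<in> X" "y \<in> X" for x y
    by (rule lip_from_dense[OF assms(4) assms(6,7) _ that]) (use H in blast)
  define W where "W = (\<lambda>ws x. foldr (\<lambda>i y. (if i = (1::nat) then f1 else f2) y) ws x)"
  have WX: "W ws x \<in> X" if "x \<in> X" for ws x
    using that assms(3,5) by (induction ws) (auto simp: W_def)
  have WL: "dist (W ws x) (W ws y) \<le> lam ^ length ws * dist x y" if "x \<in> X" "y \<in> X" for ws x y
  proof (induction ws)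
    case Nil then show ?case by (simp add: W_def)
  next
    case (Cons a ws)
    have "dist (W (a#ws) x) (W (a#ws) y) \<le> lam * dist (W ws x) (W ws y)"
      using L1 L2 WX that by (simp add: W_def)
    also have "\<dots> \<le> lam * (lam ^ length ws * dist x y)"
      using Cons assms(6) by (intro mult_left_mono) auto
    finally show ?case by simp
  qed
  obtain D where D: "\<forall>x\<in>X. \<forall>y\<in>X. dist x y \<le> D"
    using compact_imp_bounded[OF assms(1)] bounded_two_points by blast
  have MI: "multi_iter f1 f2 n x = (\<lambda>ws. W ws x) ` {ws. ws \<in> lists {1,2} \<and> length ws = n}" for n x
    by (auto simp: multi_iter_def W_def)
  have ne: "{ws. ws \<in> lists {1,2::nat} \<and> length ws = n} \<noteq> {}" for n
    by (rule_tac ex_in_conv[THEN iffD1], rule exI[of _ "replicate n 1"]) auto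
  have HD: "hausdorff_dist (multi_iter f1 f2 n x) (multi_iter f1 f2 n y) \<le> lam ^ n * dist x y"
    if "x \<in> X" "y \<in> X" for n x y
  proof -
    let ?S = "{ws. ws \<in> lists {1,2::nat} \<and> length ws = n}"
    have one: "(SUP a\<in>(\<lambda>ws. W ws x) ` ?S. INF b\<in>(\<lambda>ws. W ws y) ` ?S. dist a b) \<le> lam ^ n * dist x y"
      if "x \<in> X" "y \<in> X" for x y
    proof (rule cSUP_least)
      show "(\<lambda>ws. W ws x) ` ?S \<noteq> {}" using ne by blast
    next
      fix a assume "a \<in> (\<lambda>ws. W ws x) ` ?S"
      then obtain ws where ws: "ws \<in> ?S" "a = W ws x" by auto
      have "(INF b\<in>(\<lambda>ws. W ws y) ` ?S. dist a b) \<le> dist a (W ws y)"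
        by (rule cINF_lower) (use ws in \<open>auto intro: bdd_belowI[of _ 0]\<close>)
      also have "\<dots> \<le> lam ^ n * dist x y" using WL[OF that, of ws] ws by simp
      finally show "(INF b\<in>(\<lambda>ws. W ws y) ` ?S. dist a b) \<le> lam ^ n * dist x y" .
    qed
    show ?thesis unfolding hausdorff_dist_def MI
      using one[OF that] one[OF that(2,1)] by (simp add: dist_commute)
  qed
  show ?thesis unfolding hm_accessible_def
  proof (intro allI impI)
    fix e :: real and U V
    assume e: "e > 0" and UV: "openin (top_of_set X) U \<and> U \<noteq> {} \<and> openin (top_of_set X) V \<and> V \<noteq> {}"
    then obtain x y where xy: "x \<in> U" "y \<in> V" by blast
    have xyX: "x \<in> X" "y \<in> X" using UV xy openin_imp_subset by blast+
    define D' where "D' = max D 0 + 1"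
    have D': "D' > 0" "dist x y \<le> D'" proof -
      have "dist x y \<le> D" using D xyX by blast
      then show "D' > 0" "dist x y \<le> D'" unfolding D'_def by linarith+
    qed
    obtain n where n: "lam ^ n < e / D'" using real_arch_pow_inv[of "e/D'" lam] e D' assms(7) by auto
    have "lam ^ Suc n \<le> lam ^ n" using assms(6,7) by (simp add: power_decreasing)
    hence "lam ^ Suc n * dist x y \<le> lam ^ n * D'"
      using D' assms(6) by (intro mult_mono) auto
    also have "\<dots> < e" using n D' by (simp add: field_simps)
    finally have "hausdorff_dist (multi_iter f1 f2 (Suc n) x) (multi_iter f1 f2 (Suc n) y) < e"
      using HD[OF xyX, of "Suc n"] by linarith
    then show "\<exists>x\<in>U. \<exists>y\<in>V. \<exists>n. 1 \<le> n \<and> hausdorff_dist (multi_iter f1 f2 n x) (multi_iter f1 f2 n y) < e"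
      using xy by (intro bexI exI[of _ "Suc n"]) auto
  qed
qed

end
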